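(* Let $X\subset\mathbb{R}^2$ be a finite set of at least two distinct points. Then $$\lim_{k\to\infty}\frac{\ell^k_{\mathrm{MSTH}}(X)}{\ell^k_{\mathrm{OPT}}(X)}=\frac{L_{\mathrm{MST}}(X)}{L_{\mathrm{SMT}}(X)}.$$
   Context: All lengths are Euclidean. For a tree $T$ embedded in the plane, $\ell_{\max}(T)$ is the length of its longest edge. For a positive integer $k$, $\mathcal{C}(X,k)$ is the set of all trees whose vertex set is $X\cup S$ for some set $S\subset\mathbb{R}^2$ of at most $k$ additional points. $\ell^k_{\mathrm{OPT}}(X)=\inf\{\ell_{\max}(T): T\in\mathcal{C}(X,k)\}$ is the optimal bottleneck length. Let $e_1,\dots,e_{n-1}$ be the edges of a Euclidean minimum spanning tree on $X$ (the multiset of edge lengths does not depend on the choice of MST). The minimum spanning tree heuristic (MSTH) places $k$ degree-two Steiner points ("beads") on these edges, $n_i\ge 0$ equally spaced beads on $e_i$ with $\sum_i n_i=k$, chosen so as to minimise the longest resulting edge; thus $\ell^k_{\mathrm{MSTH}}(X)=\min\{\max_i |e_i|/(n_i+1): n_i\in\mathbb{Z}_{\ge0},\ \sum_i n_i=k\}$. $L_{\mathrm{MST}}(X)$ is the total length of a minimum spanning tree on $X$, and $L_{\mathrm{SMT}}(X)$ is the total length of a Steiner minimal tree on $X$, i.e. the infimum of total edge length over all trees whose vertex set contains $X$ together with any finite number of additional points of the plane. *)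

theory Defs
  imports "HOL-Analysis.Analysis"
begin

type_synonym pt = "real^2"

text \<open>Geometric graphs in the plane: vertices are points, edges are 2-element sets of
  points; the length of an edge is the Euclidean distance of its endpoints.\<close>

definition edge_len :: "pt set \<Rightarrow> real" where
  "edge_len e = diameter e"

definition adj :: "pt set set \<Rightarrow> pt \<Rightarrow> pt \<Rightarrow> bool" where
  "adj E u v \<longleftrightarrow> {u, v} \<in> E"

definition is_graph :: "pt set \<Rightarrow> pt set set \<Rightarrow> bool" where
  "is_graph V E \<longleftrightarrow> finite V \<and> E \<subseteq> {{u, v} | u v. u \<in> V \<and> v \<in> V \<and> u \<noteq> v}"

definition connected_graph :: "pt set \<Rightarrow> pt set set \<Rightarrow> bool" where
  "connected_graph V E \<longleftrightarrow> (\<forall>u\<in>V. \<forall>v\<in>V. (adj E)\<^sup>*\<^sup>* u v)"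

text \<open>A tree: a connected graph that is acyclic, i.e. every edge is a bridge
  (its removal disconnects its two endpoints).\<close>
definition is_tree :: "pt set \<Rightarrow> pt set set \<Rightarrow> bool" where
  "is_tree V E \<longleftrightarrow> is_graph V E \<and> connected_graph V E \<and>
     (\<forall>u v. {u, v} \<in> E \<longrightarrow> \<not> (adj (E - {{u, v}}))\<^sup>*\<^sup>* u v)"

definition lmax :: "pt set set \<Rightarrow> real" where
  "lmax E = Max (edge_len ` E)"

definition total_len :: "pt set set \<Rightarrow> real" where
  "total_len E = (\<Sum>e\<in>E. edge_len e)"

text \<open>Optimal bottleneck length with at most k Steiner points.\<close>
definition l_opt :: "pt set \<Rightarrow> nat \<Rightarrow> real" where
  "l_opt X k = Inf {lmax E | V E S. is_tree V E \<and> V = X \<union> S \<and> finite S \<and> card S \<le> k}"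

definition is_MST :: "pt set \<Rightarrow> pt set set \<Rightarrow> bool" where
  "is_MST X E \<longleftrightarrow> is_tree X E \<and> (\<forall>E'. is_tree X E' \<longrightarrow> total_len E \<le> total_len E')"

definition some_MST :: "pt set \<Rightarrow> pt set set" where
  "some_MST X = (SOME E. is_MST X E)"

text \<open>MST heuristic: distribute k beads over the MST edges (the minimum is attained,
  so Inf is the minimum).\<close>
definition l_msth :: "pt set \<Rightarrow> nat \<Rightarrow> real" where
  "l_msth X k = Inf {Max ((\<lambda>e. edge_len e / (real (n e) + 1)) ` some_MST X) | n :: pt set \<Rightarrow> nat.
                       (\<Sum>e\<in>some_MST X. n e) = k}"

definition L_MST :: "pt set \<Rightarrow> real" where
  "L_MST X = total_len (some_MST X)"

definition L_SMT :: "pt set \<Rightarrow> real" where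
  "L_SMT X = Inf {total_len E | V E. is_tree V E \<and> X \<subseteq> V}"

end

theory Submission
  imports Defs "HOL-Real_Asymp.Real_Asymp"
begin


abbreviation reach :: "pt set set \<Rightarrow> pt \<Rightarrow> pt \<Rightarrow> bool" where
  "reach E \<equiv> (adj E)\<^sup>*\<^sup>*"

lemma edge_len2: "edge_len {a, b} = dist a b"
  unfolding edge_len_def
proof (rule antisym)
  show "diameter {a, b} \<le> dist a b"
    by (rule diameter_le) (auto simp: dist_norm norm_minus_commute)
  show "dist a b \<le> diameter {a, b}"
    by (rule diameter_bounded_bound) auto
qed

lemma adj_sym: "adj E u v = adj E v u"
  unfolding adj_def by (simp add: insert_commute)

lemma reach_sym: "reach E u v \<Longrightarrow> reach E v u"
proof (induction rule: rtranclp_induct)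
  case base then show ?case by simp
next
  case (step y z)
  then show ?case by (metis adj_sym converse_rtranclp_into_rtranclp)
qed

lemma reach_mono: "E \<subseteq> F \<Longrightarrow> reach E u v \<Longrightarrow> reach F u v"
  by (erule rtranclp_mono[THEN predicate2D, rotated]) (auto simp: adj_def)

lemma reach_edge: "{u, v} \<in> E \<Longrightarrow> reach E u v"
  by (simp add: adj_def r_into_rtranclp)

lemma reach_isolated:
  assumes "reach F p q" "p \<noteq> q" "\<forall>e\<in>F. q \<notin> e"
  shows False
proof -
  have "p = q \<or> (\<exists>w. reach F p w \<and> adj F w q)" using assms(1)
    by (induction rule: rtranclp_induct) auto
  then show False using assms by (auto simp: adj_def)
qed

lemma reach_isolated2:
  assumes "reach F p q" "p \<noteq> q" "\<forall>e\<in>F. p \<notin> e"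
  shows False
  using reach_isolated[OF reach_sym[OF assms(1)]] assms by auto

lemma reach_proj:
  assumes "reach (insert {a, b} F) p q" "\<forall>e\<in>F. b \<notin> e" "a \<noteq> b" "p \<noteq> b"
  shows "(q = b \<and> reach F p a) \<or> (q \<noteq> b \<and> reach F p q)"
  using assms(1)
proof (induction rule: rtranclp_induct)
  case base then show ?case using assms by simp
next
  case (step y z)
  from step.hyps(2) have e: "{y, z} = {a, b} \<or> {y, z} \<in> F" by (auto simp: adj_def)
  show ?case
  proof (cases "{y, z} = {a, b}")
    case True
    then have "(y = a \<and> z = b) \<or> (y = b \<and> z = a)" by (auto simp: doubleton_eq_iff)
    then show ?thesis using step.IH assms(3) by auto
  next
    case False
    with e have yz: "{y, z} \<in> F" by simp
    then have "y \<noteq> b" "z \<noteq> b" using assms(2) by auto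
    then show ?thesis using step.IH yz
      by (auto simp: adj_def intro: rtranclp.rtrancl_into_rtrancl)
  qed
qed

lemma is_graph_edges: "is_graph V E \<Longrightarrow> e \<in> E \<Longrightarrow> \<exists>u v. e = {u, v} \<and> u \<in> V \<and> v \<in> V \<and> u \<noteq> v"
  unfolding is_graph_def by blast

lemma is_graph_finite_E: assumes "is_graph V E" shows "finite E"
proof -
  have "E \<subseteq> Pow V" using assms unfolding is_graph_def by blast
  moreover have "finite V" using assms unfolding is_graph_def by simp
  ultimately show ?thesis by (meson finite_Pow_iff finite_subset)
qed

lemma tree_single: "is_tree {x} {}"
  unfolding is_tree_def is_graph_def connected_graph_def by (auto simp: adj_def)

lemma tree_grow:
  assumes T: "is_tree U T" and a: "a \<in> U" and b: "b \<notin> U"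
  shows "is_tree (insert b U) (insert {a, b} T)"
proof -
  have g: "is_graph U T" and c: "connected_graph U T"
    and br: "\<forall>u v. {u, v} \<in> T \<longrightarrow> \<not> reach (T - {{u, v}}) u v"
    using T unfolding is_tree_def by auto
  have ab: "a \<noteq> b" using a b by auto
  have bT: "\<forall>e\<in>T. b \<notin> e" using g b unfolding is_graph_def by blast
  have abT: "{a, b} \<notin> T" using bT by auto
  let ?T = "insert {a, b} T"
  have g': "is_graph (insert b U) ?T"
  proof -
    have "finite (insert b U)" using g unfolding is_graph_def by simp
    moreover have "T \<subseteq> {{u, v} |u v. u \<in> insert b U \<and> v \<in> insert b U \<and> u \<noteq> v}"
      using g unfolding is_graph_def by blast
    moreover have "{a, b} \<in> {{u, v} |u v. u \<in> insert b U \<and> v \<in> insert b U \<and> u \<noteq> v}"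
      using a ab by blast
    ultimately show ?thesis unfolding is_graph_def by blast
  qed
  have rab1: "reach ?T a b" by (rule reach_edge) simp
  have rab: "reach ?T a b" "reach ?T b a" using rab1 reach_sym[OF rab1] by auto
  have c': "connected_graph (insert b U) ?T"
    unfolding connected_graph_def
  proof (intro ballI)
    fix u v assume u: "u \<in> insert b U" and v: "v \<in> insert b U"
    have r: "\<And>x y. x \<in> U \<Longrightarrow> y \<in> U \<Longrightarrow> reach ?T x y"
      using c reach_mono[of T ?T] unfolding connected_graph_def by blast
    show "reach ?T u v"
    proof (cases "u = b")
      case True
      show ?thesis
      proof (cases "v = b")
        case True with \<open>u = b\<close> show ?thesis by simp
      next
        case False
        then have "v \<in> U" using v by simp
        then show ?thesis using True rab r[OF a] by (meson rtranclp_trans)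
      qed
    next
      case False
      then have uU: "u \<in> U" using u by simp
      show ?thesis
      proof (cases "v = b")
        case True then show ?thesis using rab r[OF uU a] by (meson rtranclp_trans)
      next
        case False then show ?thesis using v r[OF uU] by simp
      qed
    qed
  qed
  have br': "\<forall>u v. {u, v} \<in> ?T \<longrightarrow> \<not> reach (?T - {{u, v}}) u v"
  proof (intro allI impI notI)
    fix u v assume uv: "{u, v} \<in> ?T" and r: "reach (?T - {{u, v}}) u v"
    show False
    proof (cases "{u, v} = {a, b}")
      case True
      then have eq: "?T - {{u, v}} = T" using abT by auto
      from True have "(u = a \<and> v = b) \<or> (u = b \<and> v = a)" by (auto simp: doubleton_eq_iff)
      then show False
      proof
        assume "u = a \<and> v = b"
        then show False using reach_isolated[of T u v] r eq bT ab by auto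
      next
        assume "u = b \<and> v = a"
        then show False using reach_isolated2[of T u v] r eq bT ab by auto
      qed
    next
      case False
      then have uvT: "{u, v} \<in> T" using uv by simp
      obtain u' v' where "{u, v} = {u', v'}" "u' \<in> U" "v' \<in> U" using is_graph_edges[OF g uvT] by blast
      then have "u \<in> U" "v \<in> U" by (auto simp: doubleton_eq_iff)
      then have ub: "u \<noteq> b" "v \<noteq> b" using b by auto
      have eq: "?T - {{u, v}} = insert {a, b} (T - {{u, v}})" using False by auto
      have "reach (T - {{u, v}}) u v"
        using reach_proj[of a b "T - {{u, v}}" u v] r eq bT ab ub by auto
      then show False using br uvT by blast
    qed
  qed
  show ?thesis unfolding is_tree_def using g' c' br' by (intro conjI)
qed

lemma reach_exit:
  assumes "reach E p q" "p \<in> U" "q \<notin> U"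
  shows "\<exists>x y. {x, y} \<in> E \<and> x \<in> U \<and> y \<notin> U"
  using assms
proof (induction rule: rtranclp_induct)
  case base then show ?case by simp
next
  case (step y z)
  show ?case
  proof (cases "y \<in> U")
    case True then show ?thesis using step by (auto simp: adj_def)
  next
    case False then show ?thesis using step by blast
  qed
qed

lemma spanning_tree_aux:
  assumes g: "is_graph V E" and c: "connected_graph V E"
  shows "U \<subseteq> V \<Longrightarrow> is_tree U T \<Longrightarrow> T \<subseteq> E \<Longrightarrow> card T + 1 = card U \<Longrightarrow> card V - card U = d \<Longrightarrow>
     (\<exists>T'. T' \<subseteq> E \<and> is_tree V T' \<and> card T' + 1 = card V)"
proof (induction d arbitrary: U T)
  case 0
  have fV: "finite V" using g unfolding is_graph_def by simp
  have "card U \<le> card V" using 0(1) fV card_mono by blast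
  then have "card U = card V" using 0(5) by simp
  then have "U = V" using 0(1) fV card_subset_eq by blast
  then show ?case using 0(2,3,4) by blast
next
  case (Suc d)
  have fV: "finite V" using g unfolding is_graph_def by simp
  have "U \<noteq> {}" using Suc.prems(4) by auto
  then obtain u0 where u0: "u0 \<in> U" by auto
  have "U \<noteq> V" using Suc.prems(5) by auto
  then obtain v0 where v0: "v0 \<in> V" "v0 \<notin> U" using Suc.prems(1) by auto
  have "u0 \<in> V" using u0 Suc.prems(1) by auto
  then have "reach E u0 v0" using c v0(1) unfolding connected_graph_def by simp
  then obtain x y where xy: "{x, y} \<in> E" "x \<in> U" "y \<notin> U"
    using reach_exit[of E u0 v0 U] u0 v0(2) by auto
  have yV: "y \<in> V" using is_graph_edges[OF g xy(1)] by (auto simp: doubleton_eq_iff)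
  have gT: "is_graph U T" using Suc.prems(2) unfolding is_tree_def by simp
  have Tf: "finite T" using is_graph_finite_E[OF gT] .
  have Uf: "finite U" using gT unfolding is_graph_def by simp
  have "{x, y} \<notin> T"
  proof
    assume "{x, y} \<in> T"
    from is_graph_edges[OF gT this] show False using xy by (auto simp: doubleton_eq_iff)
  qed
  then have cT: "card (insert {x, y} T) = card T + 1" using Tf by simp
  have cU: "card (insert y U) = card U + 1" using Uf xy by simp
  have "card V - card (insert y U) = d" using cU Suc.prems(5) by simp
  moreover have "insert y U \<subseteq> V" using Suc.prems(1) yV by auto
  moreover have "is_tree (insert y U) (insert {x, y} T)" using tree_grow[OF Suc.prems(2) xy(2,3)] .
  moreover have "insert {x, y} T \<subseteq> E" using Suc.prems(3) xy by auto
  moreover have "card (insert {x, y} T) + 1 = card (insert y U)" using cT cU Suc.prems(4) by simp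
  ultimately show ?case using Suc.IH by blast
qed

lemma spanning_tree:
  assumes g: "is_graph V E" and c: "connected_graph V E" and ne: "V \<noteq> {}"
  shows "\<exists>T. T \<subseteq> E \<and> is_tree V T \<and> card T + 1 = card V"
proof -
  obtain x where x: "x \<in> V" using ne by auto
  show ?thesis using spanning_tree_aux[OF g c, of "{x}" "{}" "card V - 1"] x tree_single by simp
qed



fun plen :: "pt list \<Rightarrow> real" where
  "plen (a # b # r) = dist a b + plen (b # r)" | "plen _ = 0"

fun pedges :: "pt list \<Rightarrow> pt set set" where
  "pedges (a # b # r) = insert {a, b} (pedges (b # r))" | "pedges _ = {}"

lemma pedges_sub: "e \<in> pedges ps \<Longrightarrow> e \<subseteq> set ps"
  by (induction ps rule: pedges.induct) auto

lemma pedges_finite: "finite (pedges ps)"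
  by (induction ps rule: pedges.induct) auto

lemma plen_eq: "distinct ps \<Longrightarrow> plen ps = (\<Sum>e\<in>pedges ps. edge_len e)"
proof (induction ps rule: pedges.induct)
  case (1 a b r)
  have "{a, b} \<notin> pedges (b # r)"
  proof
    assume "{a, b} \<in> pedges (b # r)"
    then have "a \<in> set (b # r)" using pedges_sub by blast
    then show False using "1.prems" by simp
  qed
  then show ?case using 1 pedges_finite by (simp add: edge_len2)
qed auto

lemma plen_ge: "ps \<noteq> [] \<Longrightarrow> dist (hd ps) (last ps) \<le> plen ps"
proof (induction ps rule: pedges.induct)
  case (1 a b r)
  have "dist a (last (b # r)) \<le> dist a b + dist b (last (b # r))" by (rule dist_triangle)
  then show ?case using 1 by simp
qed auto

lemma pedges_Cons: "pedges zs \<subseteq> pedges (x # zs)"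
  by (cases zs) auto

lemma pedges_suffix: "pedges ys \<subseteq> pedges (xs @ ys)"
proof (induction xs)
  case Nil then show ?case by simp
next
  case (Cons x xs) then show ?case using pedges_Cons[of "xs @ ys" x] by simp
qed

lemma reach_path:
  assumes "reach E u v"
  shows "\<exists>ps. ps \<noteq> [] \<and> hd ps = u \<and> last ps = v \<and> distinct ps \<and> pedges ps \<subseteq> E"
  using assms
proof (induction rule: converse_rtranclp_induct)
  case base
  show ?case by (rule exI[of _ "[v]"]) simp
next
  case (step y z)
  then obtain ps where ps: "ps \<noteq> []" "hd ps = z" "last ps = v" "distinct ps" "pedges ps \<subseteq> E"
    by blast
  show ?case
  proof (cases "y \<in> set ps")
    case True
    then obtain xs ys where sp: "ps = xs @ y # ys" by (meson split_list)
    have "last (y # ys) = v" using ps(3) sp by simp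
    moreover have "distinct (y # ys)" using ps(4) sp by simp
    moreover have "pedges (y # ys) \<subseteq> E" using ps(5) sp pedges_suffix[of "y # ys" xs] by simp
    ultimately show ?thesis by (intro exI[of _ "y # ys"]) simp
  next
    case False
    obtain r where r: "ps = z # r" using ps(1,2) by (cases ps) auto
    have "pedges (y # ps) = insert {y, z} (pedges ps)" using r by simp
    moreover have "{y, z} \<in> E" using step.hyps(1) by (simp add: adj_def)
    ultimately have "pedges (y # ps) \<subseteq> E" using ps(5) by simp
    moreover have "last (y # ps) = v" using ps by simp
    moreover have "distinct (y # ps)" using ps False by simp
    ultimately show ?thesis by (intro exI[of _ "y # ps"]) simp
  qed
qed

lemma edge_len_nonneg: "finite e \<Longrightarrow> 0 \<le> edge_len e"
  unfolding edge_len_def by (rule diameter_ge_0) (rule finite_imp_bounded)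

lemma graph_edge_len_pos:
  assumes "is_graph V E" "e \<in> E" shows "0 < edge_len e"
proof -
  obtain u v where "e = {u, v}" "u \<noteq> v" using is_graph_edges[OF assms] by blast
  then show ?thesis by (simp add: edge_len2)
qed

lemma dist_le_total:
  assumes g: "is_graph V E" and r: "reach E u v"
  shows "dist u v \<le> total_len E"
proof -
  obtain ps where ps: "ps \<noteq> []" "hd ps = u" "last ps = v" "distinct ps" "pedges ps \<subseteq> E"
    using reach_path[OF r] by blast
  have "dist u v \<le> plen ps" using plen_ge[OF ps(1)] ps(2,3) by simp
  also have "\<dots> = (\<Sum>e\<in>pedges ps. edge_len e)" using plen_eq[OF ps(4)] .
  also have "\<dots> \<le> (\<Sum>e\<in>E. edge_len e)"
    by (rule sum_mono2[OF is_graph_finite_E[OF g] ps(5)])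
       (meson graph_edge_len_pos[OF g] less_imp_le DiffD1)
  finally show ?thesis unfolding total_len_def .
qed

lemma total_len_nonneg: "is_graph V E \<Longrightarrow> 0 \<le> total_len E"
  unfolding total_len_def by (meson graph_edge_len_pos less_imp_le sum_nonneg)



definition NN :: "real \<Rightarrow> pt \<Rightarrow> pt \<Rightarrow> nat" where
  "NN h a b = nat \<lceil>dist a b / h\<rceil>"

definition bp :: "real \<Rightarrow> pt \<Rightarrow> pt \<Rightarrow> nat \<Rightarrow> pt" where
  "bp h a b i = a + (real i / real (NN h a b)) *\<^sub>R (b - a)"

lemma NN_sym: "NN h a b = NN h b a"
  unfolding NN_def by (simp add: dist_commute)

lemma NN_pos: "h > 0 \<Longrightarrow> a \<noteq> b \<Longrightarrow> NN h a b \<ge> 1"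
proof -
  assume h: "h > 0" and ab: "a \<noteq> b"
  have "0 < dist a b / h" using h ab by simp
  then have "0 < \<lceil>dist a b / h\<rceil>" by simp
  then show ?thesis unfolding NN_def by (simp add: Suc_le_eq)
qed

lemma NN_real: "h > 0 \<Longrightarrow> real (NN h a b) = of_int \<lceil>dist a b / h\<rceil>"
proof -
  assume h: "h > 0"
  have "0 \<le> dist a b / h" using h by simp
  then have "0 \<le> \<lceil>dist a b / h\<rceil>" by simp
  then show ?thesis unfolding NN_def by simp
qed

lemma NN_ge: "h > 0 \<Longrightarrow> dist a b / h \<le> real (NN h a b)"
  using NN_real ceiling_correct by simp

lemma NN_lt: "h > 0 \<Longrightarrow> real (NN h a b) < dist a b / h + 1"
  using NN_real ceiling_correct by (metis diff_less_eq)

lemma bp0: "bp h a b 0 = a" unfolding bp_def by simp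

lemma bpN: "h > 0 \<Longrightarrow> a \<noteq> b \<Longrightarrow> bp h a b (NN h a b) = b"
  using NN_pos[of h a b] unfolding bp_def by simp

lemma bp_step: "h > 0 \<Longrightarrow> a \<noteq> b \<Longrightarrow> bp h a b (Suc i) - bp h a b i = (1 / real (NN h a b)) *\<^sub>R (b - a)"
  unfolding bp_def by (simp add: add_divide_distrib scaleR_add_left)

lemma bp_dist: assumes "h > 0" "a \<noteq> b"
  shows "dist (bp h a b i) (bp h a b (Suc i)) = dist a b / real (NN h a b)"
proof -
  have N: "real (NN h a b) > 0" using NN_pos[OF assms] by simp
  have "dist (bp h a b i) (bp h a b (Suc i)) = norm (bp h a b (Suc i) - bp h a b i)"
    by (simp add: dist_norm norm_minus_commute)
  also have "\<dots> = dist a b / real (NN h a b)" using bp_step[OF assms] N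
    by (simp add: dist_norm norm_minus_commute)
  finally show ?thesis .
qed

lemma bp_dist_le: assumes "h > 0" "a \<noteq> b"
  shows "dist (bp h a b i) (bp h a b (Suc i)) \<le> h"
proof -
  have N: "real (NN h a b) > 0" using NN_pos[OF assms] by simp
  have "dist a b / h \<le> real (NN h a b)" using NN_ge[OF assms(1)] .
  then have "dist a b \<le> h * real (NN h a b)" using assms(1) by (simp add: divide_le_eq mult.commute)
  then show ?thesis using bp_dist[OF assms] N by (simp add: divide_le_eq mult.commute)
qed

lemma bp_neq: assumes "h > 0" "a \<noteq> b" shows "bp h a b i \<noteq> bp h a b (Suc i)"
  using bp_dist[OF assms, of i] assms NN_pos[OF assms] by auto

lemma bp_swap: assumes "h > 0" "a \<noteq> b" "i \<le> NN h a b"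
  shows "bp h b a i = bp h a b (NN h a b - i)"
proof -
  let ?N = "real (NN h a b)"
  have N: "?N > 0" using NN_pos[OF assms(1,2)] by simp
  have r: "real (NN h a b - i) = ?N - real i" using assms(3) by simp
  have "bp h b a i = b + (real i / ?N) *\<^sub>R (a - b)" unfolding bp_def by (simp add: NN_sym)
  also have "\<dots> = a + ((?N - real i) / ?N) *\<^sub>R (b - a)" using N
    by (simp add: diff_divide_distrib scaleR_diff_left scaleR_diff_right algebra_simps)
  finally show ?thesis unfolding bp_def r .
qed



definition Cb :: "real \<Rightarrow> pt set \<Rightarrow> pt set" where
  "Cb h e = {bp h a b i | a b i. e = {a, b} \<and> 0 < i \<and> i < NN h a b}"

definition Eb :: "real \<Rightarrow> pt set set \<Rightarrow> pt set set" where
  "Eb h E = {{bp h a b i, bp h a b (Suc i)} | a b i. {a, b} \<in> E \<and> i < NN h a b}"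

lemma Cb_sub: assumes "h > 0" "a \<noteq> b"
  shows "Cb h {a, b} \<subseteq> bp h a b ` {0<..<NN h a b}"
proof
  fix p assume "p \<in> Cb h {a, b}"
  then obtain a' b' i where p: "p = bp h a' b' i" "{a, b} = {a', b'}" "0 < i" "i < NN h a' b'"
    unfolding Cb_def by blast
  from p(2) have "(a' = a \<and> b' = b) \<or> (a' = b \<and> b' = a)" by (auto simp: doubleton_eq_iff)
  then show "p \<in> bp h a b ` {0<..<NN h a b}"
  proof
    assume "a' = a \<and> b' = b" then show ?thesis using p by auto
  next
    assume ab: "a' = b \<and> b' = a"
    then have i: "i < NN h a b" using p(4) NN_sym by metis
    have "p = bp h a b (NN h a b - i)" using p(1) ab bp_swap[OF assms, of i] i by simp
    moreover have "NN h a b - i \<in> {0<..<NN h a b}" using i p(3) by auto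
    ultimately show ?thesis by blast
  qed
qed

lemma Cb_finite_card: assumes "h > 0" "a \<noteq> b"
  shows "finite (Cb h {a, b}) \<and> real (card (Cb h {a, b})) \<le> edge_len {a, b} / h"
proof -
  have f: "finite (bp h a b ` {0<..<NN h a b})" by simp
  have "card (Cb h {a, b}) \<le> card (bp h a b ` {0<..<NN h a b})"
    using card_mono[OF f Cb_sub[OF assms]] .
  also have "\<dots> \<le> card {0<..<NN h a b}" by (rule card_image_le) simp
  also have "\<dots> = NN h a b - 1" by simp
  finally have c: "card (Cb h {a, b}) \<le> NN h a b - 1" .
  have "real (NN h a b - 1) = real (NN h a b) - 1" using NN_pos[OF assms] by simp
  also have "\<dots> < dist a b / h" using NN_lt[OF assms(1), of a b] by simp
  finally have "real (card (Cb h {a, b})) \<le> dist a b / h" using c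
    by (smt (verit) of_nat_le_iff)
  then show ?thesis using finite_subset[OF Cb_sub[OF assms] f] by (simp add: edge_len2)
qed

lemma bp_in: assumes "h > 0" "a \<noteq> b" "{a, b} \<in> E" "a \<in> V" "b \<in> V" "i \<le> NN h a b"
  shows "bp h a b i \<in> V \<union> (\<Union>e\<in>E. Cb h e)"
proof (cases "i = 0")
  case True then show ?thesis using assms bp0 by simp
next
  case False
  show ?thesis
  proof (cases "i = NN h a b")
    case True then show ?thesis using assms bpN by simp
  next
    case False
    then have "bp h a b i \<in> Cb h {a, b}" using \<open>i \<noteq> 0\<close> assms(6) unfolding Cb_def by fastforce
    then show ?thesis using assms(3) by blast
  qed
qed

lemma chain_reach: assumes "h > 0" "{a, b} \<in> E"
  shows "j \<le> NN h a b \<Longrightarrow> reach (Eb h E) a (bp h a b j)"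
proof (induction j)
  case 0 then show ?case by (simp add: bp0)
next
  case (Suc j)
  have "{bp h a b j, bp h a b (Suc j)} \<in> Eb h E" unfolding Eb_def using Suc.prems assms(2) by fastforce
  then have "adj (Eb h E) (bp h a b j) (bp h a b (Suc j))" by (simp add: adj_def)
  then show ?case using Suc by (meson Suc_leD rtranclp.rtrancl_into_rtrancl)
qed

lemma bead_tree:
  assumes g: "is_graph V E" and c: "connected_graph V E" and h: "h > 0" and ne: "V \<noteq> {}"
  shows "\<exists>V' Tr. is_tree V' Tr \<and> V \<subseteq> V' \<and> real (card (V' - V)) \<le> total_len E / h \<and>
               (\<forall>e\<in>Tr. edge_len e \<le> h) \<and> card Tr + 1 = card V'"
proof -
  let ?B = "\<Union>e\<in>E. Cb h e"
  let ?V = "V \<union> ?B"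
  let ?E = "Eb h E"
  have fE: "finite E" using is_graph_finite_E[OF g] .
  have fV: "finite V" using g unfolding is_graph_def by simp
  have Ce: "finite (Cb h e) \<and> real (card (Cb h e)) \<le> edge_len e / h" if eE: "e \<in> E" for e
  proof -
    obtain a b where "e = {a, b}" "a \<noteq> b" using is_graph_edges[OF g eE] by blast
    then show ?thesis using Cb_finite_card[OF h] by simp
  qed
  have fB: "finite ?B" using fE Ce by blast
  have "real (card ?B) \<le> real (\<Sum>e\<in>E. card (Cb h e))"
    using card_UN_le[OF fE, of "Cb h"] of_nat_le_iff by blast
  also have "\<dots> = (\<Sum>e\<in>E. real (card (Cb h e)))" by simp
  also have "\<dots> \<le> (\<Sum>e\<in>E. edge_len e / h)" by (rule sum_mono) (use Ce in blast)
  also have "\<dots> = total_len E / h" unfolding total_len_def by (simp add: sum_divide_distrib)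
  finally have cB: "real (card ?B) \<le> total_len E / h" .
  have "card (?V - V) \<le> card ?B" by (rule card_mono[OF fB]) blast
  then have cVV: "real (card (?V - V)) \<le> total_len E / h" using cB by linarith
  have edgeform: "\<exists>a b i. e = {bp h a b i, bp h a b (Suc i)} \<and> {a, b} \<in> E \<and> i < NN h a b \<and> a \<noteq> b \<and> a \<in> V \<and> b \<in> V"
    if eE: "e \<in> ?E" for e
  proof -
    obtain a b i where e: "e = {bp h a b i, bp h a b (Suc i)}" "{a, b} \<in> E" "i < NN h a b"
      using eE unfolding Eb_def by blast
    obtain u v where "{a, b} = {u, v}" "u \<in> V" "v \<in> V" "u \<noteq> v" using is_graph_edges[OF g e(2)] by blast
    then have "a \<noteq> b" "a \<in> V" "b \<in> V" by (auto simp: doubleton_eq_iff)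
    then show ?thesis using e by blast
  qed
  have g': "is_graph ?V ?E"
    unfolding is_graph_def
  proof
    show "finite ?V" using fV fB by simp
    show "?E \<subseteq> {{u, v} |u v. u \<in> ?V \<and> v \<in> ?V \<and> u \<noteq> v}"
    proof
      fix e assume "e \<in> ?E"
      then obtain a b i where e: "e = {bp h a b i, bp h a b (Suc i)}" "{a, b} \<in> E" "i < NN h a b"
        "a \<noteq> b" "a \<in> V" "b \<in> V" using edgeform by blast
      have "bp h a b i \<in> ?V" using bp_in[OF h e(4,2,5,6)] e(3) by simp
      moreover have "bp h a b (Suc i) \<in> ?V" using bp_in[OF h e(4,2,5,6)] e(3) by simp
      moreover have "bp h a b i \<noteq> bp h a b (Suc i)" using bp_neq[OF h e(4)] .
      ultimately show "e \<in> {{u, v} |u v. u \<in> ?V \<and> v \<in> ?V \<and> u \<noteq> v}" using e(1) by blast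
    qed
  qed
  have redge: "reach ?E a b" if abE: "{a, b} \<in> E" for a b
  proof -
    obtain u v where "{a, b} = {u, v}" "u \<noteq> v" using is_graph_edges[OF g abE] by blast
    then have ab: "a \<noteq> b" by (auto simp: doubleton_eq_iff)
    show ?thesis using chain_reach[OF h abE, of "NN h a b"] bpN[OF h ab] by simp
  qed
  have rEE: "reach E x y \<Longrightarrow> reach ?E x y" for x y
  proof (induction rule: rtranclp_induct)
    case base then show ?case by simp
  next
    case (step y z)
    then have "{y, z} \<in> E" by (simp add: adj_def)
    then show ?case using step.IH redge by (meson rtranclp_trans)
  qed
  have root: "\<exists>a\<in>V. reach ?E a w" if wV: "w \<in> ?V" for w
  proof (cases "w \<in> V")
    case True then show ?thesis by blast
  next
    case False
    then obtain e where "e \<in> E" "w \<in> Cb h e" using wV by blast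
    then obtain a b i where w: "w = bp h a b i" "e = {a, b}" "0 < i" "i < NN h a b"
      unfolding Cb_def by blast
    have "{a, b} \<in> E" using w \<open>e \<in> E\<close> by simp
    moreover obtain u v where "{a, b} = {u, v}" "u \<in> V" "v \<in> V" using is_graph_edges[OF g \<open>{a, b} \<in> E\<close>] by blast
    then have "a \<in> V" by (auto simp: doubleton_eq_iff)
    ultimately show ?thesis using chain_reach[OF h, of a b E i] w by auto
  qed
  have c': "connected_graph ?V ?E"
    unfolding connected_graph_def
  proof (intro ballI)
    fix u v assume u: "u \<in> ?V" and v: "v \<in> ?V"
    obtain a where a: "a \<in> V" "reach ?E a u" using root[OF u] by blast
    obtain b where b: "b \<in> V" "reach ?E b v" using root[OF v] by blast
    have "reach E a b" using c a b unfolding connected_graph_def by blast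
    then have "reach ?E a b" using rEE by blast
    then show "reach ?E u v" using reach_sym[OF a(2)] b(2) by (meson rtranclp_trans)
  qed
  obtain Tr where Tr: "Tr \<subseteq> ?E" "is_tree ?V Tr" "card Tr + 1 = card ?V"
    using spanning_tree[OF g' c'] ne by blast
  have "\<forall>e\<in>Tr. edge_len e \<le> h"
  proof
    fix e assume "e \<in> Tr"
    then obtain a b i where e: "e = {bp h a b i, bp h a b (Suc i)}" "a \<noteq> b"
      using edgeform Tr(1) by blast
    show "edge_len e \<le> h" using e bp_dist_le[OF h e(2)] by (simp add: edge_len2)
  qed
  then show ?thesis using Tr cVV by blast
qed



lemma lim_aux1: "(\<lambda>k::nat. real k * A / (real k - C)) \<longlonglongrightarrow> A"
  by real_asymp

lemma lim_aux2: "(\<lambda>k::nat. real k * A / (C + real k)) \<longlonglongrightarrow> A"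
  by real_asymp

lemma tree_nonempty_edges:
  assumes "is_tree V E" "a \<in> V" "b \<in> V" "a \<noteq> b" shows "E \<noteq> {}"
proof
  assume "E = {}"
  moreover have "reach E a b" using assms unfolding is_tree_def connected_graph_def by blast
  ultimately show False using reach_isolated[of E a b] assms(4) by simp
qed

lemma exists_tree:
  assumes "finite X" "X \<noteq> {}"
  shows "\<exists>E. is_tree X E"
proof -
  let ?K = "{{u, v} |u v. u \<in> X \<and> v \<in> X \<and> u \<noteq> v}"
  have g: "is_graph X ?K" using assms unfolding is_graph_def by blast
  have c: "connected_graph X ?K" unfolding connected_graph_def
  proof (intro ballI)
    fix u v assume "u \<in> X" "v \<in> X"
    then show "reach ?K u v"
    proof (cases "u = v")
      case False
      then have "{u, v} \<in> ?K" using \<open>u \<in> X\<close> \<open>v \<in> X\<close> by blast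
      then show ?thesis by (rule reach_edge)
    qed simp
  qed
  show ?thesis using spanning_tree[OF g c assms(2)] by blast
qed

lemma MST_exists:
  assumes "finite X" "X \<noteq> {}"
  shows "is_MST X (some_MST X)"
proof -
  let ?K = "{{u, v} |u v. u \<in> X \<and> v \<in> X \<and> u \<noteq> v}"
  let ?A = "{E. is_tree X E}"
  have fK: "finite ?K"
  proof -
    have "?K \<subseteq> Pow X" by blast
    then show ?thesis using assms(1) finite_subset by blast
  qed
  have "?A \<subseteq> Pow ?K" unfolding is_tree_def is_graph_def by blast
  then have fA: "finite ?A" using fK finite_subset by blast
  have neA: "?A \<noteq> {}" using exists_tree[OF assms] by blast
  let ?m = "Min (total_len ` ?A)"
  have "?m \<in> total_len ` ?A" using fA neA by simp
  then obtain E0 where E0': "E0 \<in> ?A" "?m = total_len E0" by (rule imageE) blast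
  then have E0: "is_tree X E0" "total_len E0 = ?m" by auto
  have "is_MST X E0" unfolding is_MST_def
  proof (intro conjI allI impI)
    show "is_tree X E0" by (rule E0(1))
    fix E' assume "is_tree X E'"
    then have "total_len E' \<in> total_len ` ?A" by blast
    then show "total_len E0 \<le> total_len E'" using E0(2) fA by simp
  qed
  then show ?thesis unfolding some_MST_def by (rule someI)
qed



lemma two_points:
  assumes "finite X" "2 \<le> card X" shows "\<exists>a b. a \<in> X \<and> b \<in> X \<and> a \<noteq> b"
proof -
  have "X \<noteq> {}" using assms by auto
  then obtain a where a: "a \<in> X" by auto
  have "card (X - {a}) \<ge> 1" using assms a by simp
  then have "X - {a} \<noteq> {}" by (metis card.empty not_one_le_zero)
  then obtain b where "b \<in> X - {a}" by auto
  then show ?thesis using a by blast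
qed

lemma SMT_facts:
  assumes fX: "finite X" and cX: "2 \<le> card X"
  shows "0 < L_SMT X"
    and "\<And>V E. is_tree V E \<Longrightarrow> X \<subseteq> V \<Longrightarrow> L_SMT X \<le> total_len E"
    and "L_SMT X \<le> L_MST X"
proof -
  obtain a b where ab: "a \<in> X" "b \<in> X" "a \<noteq> b" using two_points[OF assms] by blast
  let ?S = "{total_len E | V E. is_tree V E \<and> X \<subseteq> V}"
  have Xne: "X \<noteq> {}" using ab by auto
  have M: "is_tree X (some_MST X)" using MST_exists[OF fX Xne] unfolding is_MST_def by simp
  have ne: "?S \<noteq> {}" using M by blast
  have lb: "dist a b \<le> t" if "t \<in> ?S" for t
  proof -
    obtain V E where VE: "t = total_len E" "is_tree V E" "X \<subseteq> V" using \<open>t \<in> ?S\<close> by blast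
    have "reach E a b" using VE ab unfolding is_tree_def connected_graph_def by blast
    moreover have "is_graph V E" using VE unfolding is_tree_def by simp
    ultimately show ?thesis using dist_le_total VE by blast
  qed
  have "dist a b \<le> Inf ?S" by (rule cInf_greatest[OF ne]) (use lb in blast)
  moreover have "0 < dist a b" using ab by simp
  ultimately show "0 < L_SMT X" unfolding L_SMT_def by linarith
  have bdd: "bdd_below ?S" using lb by (rule bdd_belowI)
  show le: "L_SMT X \<le> total_len E" if "is_tree V E" "X \<subseteq> V" for V E
    unfolding L_SMT_def by (rule cInf_lower[OF _ bdd]) (use that in blast)
  show "L_SMT X \<le> L_MST X" unfolding L_MST_def using le[OF M] by simp
qed

lemma msth_bounds:
  fixes M :: "pt set set"
  assumes fM: "finite M" and neM: "M \<noteq> {}" and pos: "\<forall>e\<in>M. 0 \<le> edge_len e"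
    and L: "L = (\<Sum>e\<in>M. edge_len e)" and Lpos: "0 < L" and k: "1 \<le> k"
  defines "S \<equiv> {Max ((\<lambda>e. edge_len e / (real (n e) + 1)) ` M) | n :: pt set \<Rightarrow> nat. (\<Sum>e\<in>M. n e) = k}"
  shows "L / (real k + real (card M)) \<le> Inf S" and "Inf S \<le> L / real k"
proof -
  obtain e0 where e0: "e0 \<in> M" using neM by auto
  have ne: "S \<noteq> {}"
  proof -
    have "(\<Sum>e\<in>M. (\<lambda>e. if e = e0 then k else 0) e) = k" using fM e0 by (simp add: sum.delta)
    then show ?thesis unfolding S_def by blast
  qed
  have lbS: "L / (real k + real (card M)) \<le> x" if "x \<in> S" for x
  proof -
    obtain n where n: "x = Max ((\<lambda>e. edge_len e / (real (n e) + 1)) ` M)" "(\<Sum>e\<in>M. n e) = k"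
      using \<open>x \<in> S\<close> unfolding S_def by blast
    have le: "edge_len e \<le> x * (real (n e) + 1)" if "e \<in> M" for e
    proof -
      have "edge_len e / (real (n e) + 1) \<le> x" unfolding n(1) using fM that by simp
      then show ?thesis by (simp add: divide_le_eq add_pos_nonneg)
    qed
    have "L \<le> (\<Sum>e\<in>M. x * (real (n e) + 1))" unfolding L by (rule sum_mono) (rule le)
    also have "\<dots> = x * (real k + real (card M))"
      using n(2) by (simp add: sum_distrib_left[symmetric] sum.distrib of_nat_sum[symmetric])
    finally show ?thesis using k by (simp add: pos_divide_le_eq add_pos_nonneg)
  qed
  show "L / (real k + real (card M)) \<le> Inf S" by (rule cInf_greatest[OF ne]) (rule lbS)
  have bdd: "bdd_below S" by (rule bdd_belowI) (rule lbS)
  define f where "f e = nat \<lfloor>real k * edge_len e / L\<rfloor>" for e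
  have f1: "real (f e) \<le> real k * edge_len e / L" if "e \<in> M" for e
  proof -
    have "0 \<le> real k * edge_len e / L" using pos that Lpos by simp
    then show ?thesis unfolding f_def by simp
  qed
  have f2: "real k * edge_len e / L < real (f e) + 1" if "e \<in> M" for e
  proof -
    have "0 \<le> real k * edge_len e / L" using pos that Lpos by simp
    then show ?thesis unfolding f_def by linarith
  qed
  have "real (\<Sum>e\<in>M. f e) = (\<Sum>e\<in>M. real (f e))" by simp
  also have "\<dots> \<le> (\<Sum>e\<in>M. real k * edge_len e / L)" by (rule sum_mono) (rule f1)
  also have "\<dots> = real k * L / L" unfolding L by (simp add: sum_divide_distrib sum_distrib_left)
  also have "\<dots> = real k" using Lpos by simp
  finally have sf: "(\<Sum>e\<in>M. f e) \<le> k" by linarith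
  define n where "n e = f e + (if e = e0 then k - (\<Sum>e\<in>M. f e) else 0)" for e
  have "(\<Sum>e\<in>M. n e) = (\<Sum>e\<in>M. f e) + (k - (\<Sum>e\<in>M. f e))"
    unfolding n_def by (simp add: sum.distrib sum.delta fM e0)
  then have sn: "(\<Sum>e\<in>M. n e) = k" using sf by simp
  have bnd: "edge_len e / (real (n e) + 1) \<le> L / real k" if "e \<in> M" for e
  proof -
    have "real (f e) \<le> real (n e)" unfolding n_def by simp
    then have "real k * edge_len e / L < real (n e) + 1" using f2[OF that] by linarith
    then have "real k * edge_len e < L * (real (n e) + 1)" using Lpos by (simp add: divide_less_eq mult.commute)
    then show ?thesis using k by (simp add: divide_le_eq le_divide_eq add_pos_nonneg mult.commute mult.left_commute)
  qed
  have "Max ((\<lambda>e. edge_len e / (real (n e) + 1)) ` M) \<in> S" unfolding S_def using sn by blast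
  then have "Inf S \<le> Max ((\<lambda>e. edge_len e / (real (n e) + 1)) ` M)" by (rule cInf_lower[OF _ bdd])
  also have "\<dots> \<le> L / real k" using fM neM bnd by simp
  finally show "Inf S \<le> L / real k" .
qed



lemma lopt_elem_lower:
  assumes fX: "finite X" and cX: "2 \<le> card X"
    and x: "x \<in> {lmax E | V E S. is_tree V E \<and> V = X \<union> S \<and> finite S \<and> card S \<le> k}"
  shows "L_SMT X / (real (card X) + real k) \<le> x"
proof -
  obtain a b where ab: "a \<in> X" "b \<in> X" "a \<noteq> b" using two_points[OF fX cX] by blast
  obtain V E S where VE: "x = lmax E" "is_tree V E" "V = X \<union> S" "finite S" "card S \<le> k"
    using x by blast
  have g: "is_graph V E" and c: "connected_graph V E" using VE unfolding is_tree_def by auto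
  have Vne: "V \<noteq> {}" using VE ab by auto
  obtain T where T: "T \<subseteq> E" "is_tree V T" "card T + 1 = card V" using spanning_tree[OF g c Vne] by blast
  have Ls: "L_SMT X \<le> total_len T" using SMT_facts(2)[OF fX cX T(2)] VE by simp
  have fE: "finite E" using is_graph_finite_E[OF g] .
  have Ene: "E \<noteq> {}" using tree_nonempty_edges[OF VE(2), of a b] VE ab by simp
  have le: "edge_len e \<le> lmax E" if "e \<in> T" for e
    unfolding lmax_def using fE that T(1) by auto
  obtain e1 where e1: "e1 \<in> E" using Ene by auto
  have "0 < edge_len e1" using graph_edge_len_pos[OF g e1] .
  moreover have "edge_len e1 \<le> lmax E" unfolding lmax_def using fE e1 by simp
  ultimately have lpos: "0 \<le> lmax E" by simp
  have "total_len T \<le> real (card T) * lmax E"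
    unfolding total_len_def using le by (rule sum_bounded_above)
  moreover have "card V \<le> card X + k"
    using card_Un_le[of X S] VE by simp
  then have "real (card T) \<le> real (card X) + real k" using T(3) by simp
  ultimately have "L_SMT X \<le> (real (card X) + real k) * lmax E"
    using Ls lpos by (meson mult_right_mono order_trans)
  moreover have "0 < real (card X) + real k" using cX by simp
  ultimately show ?thesis using VE(1) by (simp add: divide_le_eq mult.commute)
qed

lemma lopt_lower:
  assumes fX: "finite X" and cX: "2 \<le> card X"
  shows "L_SMT X / (real (card X) + real k) \<le> l_opt X k"
    and "bdd_below {lmax E | V E S. is_tree V E \<and> V = X \<union> S \<and> finite S \<and> card S \<le> k}"
proof -
  have Xne: "X \<noteq> {}" using cX by auto
  have M: "is_tree X (some_MST X)" using MST_exists[OF fX Xne] unfolding is_MST_def by simp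
  have ne: "{lmax E | V E S. is_tree V E \<and> V = X \<union> S \<and> finite S \<and> card S \<le> k} \<noteq> {}"
  proof -
    have "lmax (some_MST X) \<in> {lmax E | V E S. is_tree V E \<and> V = X \<union> S \<and> finite S \<and> card S \<le> k}"
      using M by fastforce
    then show ?thesis by blast
  qed
  show "L_SMT X / (real (card X) + real k) \<le> l_opt X k"
    unfolding l_opt_def by (rule cInf_greatest[OF ne]) (rule lopt_elem_lower[OF fX cX])
  show "bdd_below {lmax E | V E S. is_tree V E \<and> V = X \<union> S \<and> finite S \<and> card S \<le> k}"
    by (rule bdd_belowI) (rule lopt_elem_lower[OF fX cX])
qed

lemma lopt_upper:
  assumes fX: "finite X" and cX: "2 \<le> card X" and eps: "0 < \<epsilon>"
  shows "\<exists>c::nat. \<forall>k>c. l_opt X k \<le> (L_SMT X + \<epsilon>) / (real k - real c)"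
proof -
  obtain a b where ab: "a \<in> X" "b \<in> X" "a \<noteq> b" using two_points[OF fX cX] by blast
  have Xne: "X \<noteq> {}" using ab by auto
  have M: "is_tree X (some_MST X)" using MST_exists[OF fX Xne] unfolding is_MST_def by simp
  let ?S = "{total_len E | V E. is_tree V E \<and> X \<subseteq> V}"
  have ne: "?S \<noteq> {}" using M by blast
  have "Inf ?S < L_SMT X + \<epsilon>" unfolding L_SMT_def using eps by simp
  then obtain t where "t \<in> ?S" "t < L_SMT X + \<epsilon>" using cInf_lessD[OF ne] by blast
  then obtain V E where VE: "is_tree V E" "X \<subseteq> V" "total_len E < L_SMT X + \<epsilon>" by blast
  have g: "is_graph V E" and c: "connected_graph V E" using VE unfolding is_tree_def by auto
  have fV: "finite V" using g unfolding is_graph_def by simp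
  have Vne: "V \<noteq> {}" using VE ab by auto
  have Tpos: "0 < total_len E" using SMT_facts(1,2)[OF fX cX] VE by (meson less_le_trans)
  show ?thesis
  proof (intro exI allI impI)
    fix k assume kc: "card V < k"
    define h where "h = total_len E / (real k - real (card V))"
    have kc': "0 < real k - real (card V)" using kc by simp
    have h: "0 < h" unfolding h_def using Tpos kc' by simp
    obtain V' Tr where VT: "is_tree V' Tr" "V \<subseteq> V'" "real (card (V' - V)) \<le> total_len E / h"
      "\<forall>e\<in>Tr. edge_len e \<le> h" "card Tr + 1 = card V'"
      using bead_tree[OF g c h Vne] by blast
    have g': "is_graph V' Tr" using VT unfolding is_tree_def by simp
    have fV': "finite V'" using g' unfolding is_graph_def by simp
    have "total_len E / h = real k - real (card V)" unfolding h_def using Tpos kc' by simp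
    then have c1: "real (card (V' - V)) \<le> real k - real (card V)" using VT(3) by simp
    have "V' - X \<subseteq> (V' - V) \<union> V" by blast
    then have "card (V' - X) \<le> card ((V' - V) \<union> V)" using fV' fV by (intro card_mono) auto
    also have "\<dots> \<le> card (V' - V) + card V" by (rule card_Un_le)
    finally have "real (card (V' - X)) \<le> real (card (V' - V)) + real (card V)" by linarith
    then have cS: "card (V' - X) \<le> k" using c1 by linarith
    have V'eq: "V' = X \<union> (V' - X)" using VE(2) VT(2) by blast
    have mem: "lmax Tr \<in> {lmax E | V E S. is_tree V E \<and> V = X \<union> S \<and> finite S \<and> card S \<le> k}"
      using VT(1) V'eq cS fV' by blast
    have fTr: "finite Tr" using is_graph_finite_E[OF g'] .
    have Trne: "Tr \<noteq> {}" using tree_nonempty_edges[OF VT(1), of a b] ab VE(2) VT(2) by auto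
    have "l_opt X k \<le> lmax Tr" unfolding l_opt_def by (rule cInf_lower[OF mem lopt_lower(2)[OF fX cX]])
    also have "\<dots> \<le> h" unfolding lmax_def using fTr Trne VT(4) by simp
    also have "\<dots> \<le> (L_SMT X + \<epsilon>) / (real k - real (card V))"
      unfolding h_def using VE(3) kc' by (simp add: divide_right_mono)
    finally show "l_opt X k \<le> (L_SMT X + \<epsilon>) / (real k - real (card V))" .
  qed
qed



theorem lemma2:
  fixes X :: "(real^2) set"
  assumes "finite X" and "card X \<ge> 2"
  shows "(\<lambda>k. l_msth X k / l_opt X k) \<longlonglongrightarrow> L_MST X / L_SMT X"
proof -
  note fX = assms(1) and cX = assms(2)
  obtain a b where ab: "a \<in> X" "b \<in> X" "a \<noteq> b" using two_points[OF fX cX] by blast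
  have Xne: "X \<noteq> {}" using ab by auto
  let ?M = "some_MST X"
  have M: "is_tree X ?M" using MST_exists[OF fX Xne] unfolding is_MST_def by simp
  have gM: "is_graph X ?M" using M unfolding is_tree_def by simp
  have fM: "finite ?M" using is_graph_finite_E[OF gM] .
  have neM: "?M \<noteq> {}" using tree_nonempty_edges[OF M ab] .
  have posM: "\<forall>e\<in>?M. 0 \<le> edge_len e" using graph_edge_len_pos[OF gM] less_imp_le by blast
  define Ls where "Ls = L_SMT X"
  define L where "L = L_MST X"
  have Lspos: "0 < Ls" unfolding Ls_def using SMT_facts(1)[OF fX cX] .
  have Lpos: "0 < L" unfolding L_def using SMT_facts(1,3)[OF fX cX] by linarith
  have Lsum: "L = (\<Sum>e\<in>?M. edge_len e)" unfolding L_def L_MST_def total_len_def ..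
  define f where "f k = real k * l_msth X k" for k
  define g where "g k = real k * l_opt X k" for k
  have f_lo: "real k * L / (real (card ?M) + real k) \<le> f k" if "1 \<le> k" for k
  proof -
    have "L / (real k + real (card ?M)) \<le> l_msth X k"
      unfolding l_msth_def using msth_bounds(1)[OF fM neM posM Lsum Lpos that] .
    then have "real k * (L / (real k + real (card ?M))) \<le> real k * l_msth X k"
      by (rule mult_left_mono) simp
    then show ?thesis unfolding f_def by (simp add: add.commute)
  qed
  have f_hi: "f k \<le> L" if "1 \<le> k" for k
  proof -
    have "l_msth X k \<le> L / real k"
      unfolding l_msth_def using msth_bounds(2)[OF fM neM posM Lsum Lpos that] .
    then have "real k * l_msth X k \<le> real k * (L / real k)" by (rule mult_left_mono) simp
    then show ?thesis unfolding f_def using that by simp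
  qed
  have fL: "f \<longlonglongrightarrow> L"
  proof (rule tendsto_sandwich[OF _ _ lim_aux2 tendsto_const])
    show "\<forall>\<^sub>F k in sequentially. real k * L / (real (card ?M) + real k) \<le> f k"
      using f_lo eventually_sequentially by blast
    show "\<forall>\<^sub>F k in sequentially. f k \<le> L"
      using f_hi eventually_sequentially by blast
  qed
  have g_lo: "real k * Ls / (real (card X) + real k) \<le> g k" for k
  proof -
    have "Ls / (real (card X) + real k) \<le> l_opt X k"
      unfolding Ls_def using lopt_lower(1)[OF fX cX] .
    then have "real k * (Ls / (real (card X) + real k)) \<le> real k * l_opt X k"
      by (rule mult_left_mono) simp
    then show ?thesis unfolding g_def by simp
  qed
  have gL: "g \<longlonglongrightarrow> Ls"
  proof (rule order_tendstoI)
    fix y assume "y < Ls"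
    then have "\<forall>\<^sub>F k in sequentially. y < real k * Ls / (real (card X) + real k)"
      by (rule order_tendstoD(1)[OF lim_aux2[of Ls "real (card X)"]])
    then show "\<forall>\<^sub>F k in sequentially. y < g k"
      by eventually_elim (use g_lo in \<open>blast intro: less_le_trans\<close>)
  next
    fix y assume y: "Ls < y"
    define \<epsilon> where "\<epsilon> = (y - Ls) / 2"
    have eps: "0 < \<epsilon>" unfolding \<epsilon>_def using y by simp
    have "\<exists>c::nat. \<forall>k>c. l_opt X k \<le> (Ls + \<epsilon>) / (real k - real c)"
      unfolding Ls_def by (rule lopt_upper[OF fX cX eps])
    then obtain c :: nat where c: "\<forall>k>c. l_opt X k \<le> (Ls + \<epsilon>) / (real k - real c)"
      by blast
    have "Ls + \<epsilon> < y"
    proof -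
      have "\<epsilon> * 2 = y - Ls" unfolding \<epsilon>_def by simp
      then show ?thesis using y by linarith
    qed
    then have ev1: "\<forall>\<^sub>F k in sequentially. real k * (Ls + \<epsilon>) / (real k - real c) < y"
      by (rule order_tendstoD(2)[OF lim_aux1[of "Ls + \<epsilon>" "real c"]])
    have ev2: "\<forall>\<^sub>F k in sequentially. c < k" by (rule eventually_gt_at_top)
    show "\<forall>\<^sub>F k in sequentially. g k < y"
      using ev1 ev2
    proof eventually_elim
      case (elim k)
      then have "l_opt X k \<le> (Ls + \<epsilon>) / (real k - real c)" using c by blast
      then have "real k * l_opt X k \<le> real k * ((Ls + \<epsilon>) / (real k - real c))"
        by (rule mult_left_mono) simp
      then have "g k \<le> real k * (Ls + \<epsilon>) / (real k - real c)" unfolding g_def by simp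
      then show ?case using elim(1) by linarith
    qed
  qed
  have lim: "(\<lambda>k. f k / g k) \<longlonglongrightarrow> L / Ls"
    using tendsto_divide[OF fL gL] Lspos by simp
  have ev: "\<forall>\<^sub>F k in sequentially. f k / g k = l_msth X k / l_opt X k"
  proof -
    have "\<forall>\<^sub>F k in sequentially. (0::nat) < k" by (rule eventually_gt_at_top)
    then show ?thesis
      by eventually_elim (simp add: f_def g_def)
  qed
  have "(\<lambda>k. l_msth X k / l_opt X k) \<longlonglongrightarrow> L / Ls"
    using tendsto_cong[OF ev] lim by (rule iffD1)
  then show ?thesis unfolding L_def Ls_def .
qed

end
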